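(* Let $\Phi_1,\Phi_2$ be Young functions such that $\Phi_1\prec\Phi_2$, and let $u_1,u_2:\mathbb{R}^n\to(0,\infty)$ be measurable functions such that $u_i(x+y)\le u_i(x)\,u_i(y)$ for all $x,y\in\mathbb{R}^n$, $i=1,2$. Then the following statements are equivalent: (1) $u_1\preceq u_2$; (2) $L^{u_2}_{\Phi_2}(\mathbb{R}^n)\subseteq L^{u_1}_{\Phi_1}(\mathbb{R}^n)$; (3) there exists a constant $C>0$ such that $\|f\|_{L^{u_1}_{\Phi_1}(\mathbb{R}^n)}\le C\|f\|_{L^{u_2}_{\Phi_2}(\mathbb{R}^n)}$ for every $f\in L^{u_2}_{\Phi_2}(\mathbb{R}^n)$.
   Context: A Young function is a map $\Phi:[0,\infty)\to[0,\infty)$ that is convex, left-continuous, satisfies $\lim_{t\to0}\Phi(t)=0=\Phi(0)$ and $\lim_{t\to\infty}\Phi(t)=\infty$. For Young functions, $\Phi_1\prec\Phi_2$ means there is $C>0$ with $\Phi_1(t)\le\Phi_2(Ct)$ for all $t>0$. For $u_1,u_2:\mathbb{R}^n\to(0,\infty)$, $u_1\preceq u_2$ means there is $C>0$ with $u_1(x)\le Cu_2(x)$ for all $x\in\mathbb{R}^n$. For a Young function $\Phi$ and a measurable $u:\mathbb{R}^n\to(0,\infty)$, the weighted Orlicz space $L^u_\Phi(\mathbb{R}^n)$ is the set of measurable $f:\mathbb{R}^n\to\mathbb{R}$ such that $\int_{\mathbb{R}^n}\Phi(a|u(x)f(x)|)\,dx<\infty$ for some $a>0$, with norm $\|f\|_{L^u_\Phi(\mathbb{R}^n)}=\inf\{b>0:\int_{\mathbb{R}^n}\Phi(|u(x)f(x)|/b)\,dx\le1\}$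 (Lebesgue measure). *)

theory Defs
  imports "HOL-Analysis.Analysis"
begin

definition young_function :: "(real \<Rightarrow> real) \<Rightarrow> bool" where
  "young_function \<Phi> \<longleftrightarrow>
     (\<forall>t\<ge>0. \<Phi> t \<ge> 0) \<and>
     convex_on {0..} \<Phi> \<and>
     (\<forall>t>0. (\<Phi> \<longlongrightarrow> \<Phi> t) (at_left t)) \<and>
     \<Phi> 0 = 0 \<and> (\<Phi> \<longlongrightarrow> 0) (at_right 0) \<and>
     filterlim \<Phi> at_top at_top"

definition young_prec :: "(real \<Rightarrow> real) \<Rightarrow> (real \<Rightarrow> real) \<Rightarrow> bool" where
  "young_prec \<Phi>1 \<Phi>2 \<longleftrightarrow> (\<exists>C>0. \<forall>t>0. \<Phi>1 t \<le> \<Phi>2 (C * t))"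

definition weight_preceq :: "('a \<Rightarrow> real) \<Rightarrow> ('a \<Rightarrow> real) \<Rightarrow> bool" where
  "weight_preceq u1 u2 \<longleftrightarrow> (\<exists>C>0. \<forall>x. u1 x \<le> C * u2 x)"

definition weighted_orlicz :: "(real \<Rightarrow> real) \<Rightarrow> ('a::euclidean_space \<Rightarrow> real) \<Rightarrow> ('a \<Rightarrow> real) set" where
  "weighted_orlicz \<Phi> u = {f. f \<in> borel_measurable lebesgue \<and>
     (\<exists>a>0. (\<integral>\<^sup>+ x. ennreal (\<Phi> (a * \<bar>u x * f x\<bar>)) \<partial>lebesgue) < \<infinity>)}"

text \<open>Luxemburg norm, with value infinity when no admissible b exists.\<close>
definition weighted_orlicz_norm :: "(real \<Rightarrow> real) \<Rightarrow> ('a::euclidean_space \<Rightarrow> real) \<Rightarrow> ('a \<Rightarrow> real) \<Rightarrow> ereal" where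
  "weighted_orlicz_norm \<Phi> u f = Inf {ereal b | b. b > 0 \<and>
     (\<integral>\<^sup>+ x. ennreal (\<Phi> (\<bar>u x * f x\<bar> / b)) \<partial>lebesgue) \<le> 1}"

end

theory Submission
  imports Defs
begin

lemma young_scale:
  assumes "young_function \<Phi>" "0 \<le> l" "l \<le> 1" "0 \<le> t"
  shows "\<Phi> (l * t) \<le> l * \<Phi> t"
proof -
  have c: "convex_on {0..} \<Phi>" and z: "\<Phi> 0 = 0" using assms(1) unfolding young_function_def by auto
  have "\<Phi> ((1 - l) *\<^sub>R 0 + l *\<^sub>R t) \<le> (1 - l) * \<Phi> 0 + l * \<Phi> t"
    by (rule convex_onD[OF c]) (use assms in auto)
  then show ?thesis using z by simp
qed

lemma young_nonneg: "young_function \<Phi> \<Longrightarrow> 0 \<le> t \<Longrightarrow> 0 \<le> \<Phi> t"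
  unfolding young_function_def by auto

lemma young_mono:
  assumes "young_function \<Phi>" "0 \<le> s" "s \<le> t"
  shows "\<Phi> s \<le> \<Phi> t"
proof (cases "t = 0")
  case True then show ?thesis using assms by auto
next
  case False
  then have t: "t > 0" using assms by auto
  have "\<Phi> s = \<Phi> ((s/t) * t)" using t by simp
  also have "\<dots> \<le> (s/t) * \<Phi> t" by (rule young_scale) (use assms t in auto)
  also have "\<dots> \<le> \<Phi> t"
  proof -
    have "s * \<Phi> t \<le> t * \<Phi> t" using young_nonneg[OF assms(1), of t] assms t
      by (intro mult_right_mono) auto
    then show ?thesis using t by (simp add: pos_divide_le_eq mult.commute)
  qed
  finally show ?thesis .
qed

lemma young_meas:
  assumes "young_function \<Phi>" "g \<in> borel_measurable M" "\<And>x. g x \<ge> 0"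
  shows "(\<lambda>x. \<Phi> (g x)) \<in> borel_measurable M"
proof -
  have "mono (\<lambda>t. \<Phi> (max 0 t))"
    by (rule monoI) (auto intro!: young_mono[OF assms(1)])
  then have "(\<lambda>t. \<Phi> (max 0 t)) \<in> borel_measurable borel" by (rule borel_measurable_mono)
  from measurable_comp[OF assms(2) this] show ?thesis using assms(3)
    by (simp add: o_def max_absorb2)
qed

lemma orlicz_norm_ball:
  assumes "young_function \<Phi>" "f \<in> weighted_orlicz \<Phi> u" "u \<in> borel_measurable lebesgue"
  shows "\<exists>b>0. (\<integral>\<^sup>+ x. ennreal (\<Phi> (\<bar>u x * f x\<bar> / b)) \<partial>lebesgue) \<le> 1"
proof -
  from assms(2) obtain a where a: "a > 0" and fm: "f \<in> borel_measurable lebesgue"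
    and I: "(\<integral>\<^sup>+ x. ennreal (\<Phi> (a * \<bar>u x * f x\<bar>)) \<partial>lebesgue) < \<infinity>"
    unfolding weighted_orlicz_def by auto
  define I where "I = (\<integral>\<^sup>+ x. ennreal (\<Phi> (a * \<bar>u x * f x\<bar>)) \<partial>lebesgue)"
  define r where "r = max 1 (enn2real I)"
  have r1: "r \<ge> 1" unfolding r_def by auto
  have Ir: "I \<le> ennreal r" using I unfolding I_def[symmetric] r_def
    by (metis ennreal_enn2real_if ennreal_le_iff less_top max.cobounded2 order.refl top.extremum_strict zero_le_one le_max_iff_disj)
  define b where "b = r / a"
  have b: "b > 0" using r1 a by (simp add: b_def)
  have meas: "(\<lambda>x. \<Phi> (a * \<bar>u x * f x\<bar>)) \<in> borel_measurable lebesgue"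
    by (rule young_meas[OF assms(1)]) (use fm assms(3) a in auto)
  have "(\<integral>\<^sup>+ x. ennreal (\<Phi> (\<bar>u x * f x\<bar> / b)) \<partial>lebesgue)
      \<le> (\<integral>\<^sup>+ x. ennreal (1/r) * ennreal (\<Phi> (a * \<bar>u x * f x\<bar>)) \<partial>lebesgue)"
  proof (rule nn_integral_mono)
    fix x
    have "\<bar>u x * f x\<bar> / b = (1/r) * (a * \<bar>u x * f x\<bar>)" using r1 a by (simp add: b_def)
    also have "\<Phi> \<dots> \<le> (1/r) * \<Phi> (a * \<bar>u x * f x\<bar>)"
      by (rule young_scale[OF assms(1)]) (use r1 a in auto)
    finally show "ennreal (\<Phi> (\<bar>u x * f x\<bar> / b)) \<le> ennreal (1/r) * ennreal (\<Phi> (a * \<bar>u x * f x\<bar>))"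
      using r1 by (simp add: ennreal_mult'[symmetric] ennreal_leI)
  qed
  also have "\<dots> = ennreal (1/r) * I"
    unfolding I_def by (rule nn_integral_cmult) (use meas in auto)
  also have "\<dots> \<le> ennreal (1/r) * ennreal r" using Ir by (rule mult_left_mono) auto
  also have "\<dots> = 1" using r1 by (simp add: ennreal_mult'[symmetric])
  finally show ?thesis using b by auto
qed

lemma prec_le:
  assumes "young_function \<Phi>1" "young_function \<Phi>2" "young_prec \<Phi>1 \<Phi>2"
  obtains C where "C > 0" "\<And>t. t \<ge> 0 \<Longrightarrow> \<Phi>1 t \<le> \<Phi>2 (C * t)"
proof -
  from assms(3) obtain C where C: "C > 0" "\<And>t. t > 0 \<Longrightarrow> \<Phi>1 t \<le> \<Phi>2 (C * t)"
    unfolding young_prec_def by auto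
  have "\<Phi>1 t \<le> \<Phi>2 (C * t)" if "t \<ge> 0" for t
  proof (cases "t = 0")
    case True then show ?thesis using assms(1,2) by (simp add: young_function_def)
  qed (use C that in auto)
  with C show ?thesis using that by blast
qed

lemma pointwise_12:
  assumes "young_function \<Phi>1" "young_function \<Phi>2"
    and "\<And>t. t \<ge> 0 \<Longrightarrow> \<Phi>1 t \<le> \<Phi>2 (C' * t)" "C' > 0"
    and "\<And>x. u1 x \<le> C * u2 x" "C > 0" "\<And>x. u1 x > 0" "\<And>x. u2 x > 0" "a > 0"
  shows "\<Phi>1 (a / (C * C') * \<bar>u1 x * f x\<bar>) \<le> \<Phi>2 (a * \<bar>u2 x * f x\<bar>)"
proof -
  have "\<bar>u1 x * f x\<bar> \<le> C * \<bar>u2 x * f x\<bar>"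
    using mult_right_mono[OF assms(5)[of x], of "\<bar>f x\<bar>"] assms(7,8)[of x] by (simp add: abs_mult mult.assoc)
  then have "a / (C * C') * \<bar>u1 x * f x\<bar> \<le> a / (C * C') * (C * \<bar>u2 x * f x\<bar>)"
    using assms by (intro mult_left_mono) auto
  then have "\<Phi>1 (a / (C * C') * \<bar>u1 x * f x\<bar>) \<le> \<Phi>1 (a / (C * C') * (C * \<bar>u2 x * f x\<bar>))"
    using assms by (intro young_mono[OF assms(1)]) auto
  also have "\<dots> \<le> \<Phi>2 (C' * (a / (C * C') * (C * \<bar>u2 x * f x\<bar>)))"
    using assms by (intro assms(3)) auto
  also have "C' * (a / (C * C') * (C * \<bar>u2 x * f x\<bar>)) = a * \<bar>u2 x * f x\<bar>"
    using assms by (simp add: field_simps)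
  finally show ?thesis .
qed

lemma one_two:
  assumes "young_function \<Phi>1" "young_function \<Phi>2" "young_prec \<Phi>1 \<Phi>2"
    and "weight_preceq u1 u2" "\<And>x. u1 x > 0" "\<And>x. u2 x > 0"
  shows "weighted_orlicz \<Phi>2 u2 \<subseteq> weighted_orlicz \<Phi>1 u1"
proof
  obtain C' where C': "C' > 0" "\<And>t. t \<ge> 0 \<Longrightarrow> \<Phi>1 t \<le> \<Phi>2 (C' * t)"
    using prec_le[OF assms(1-3)] by blast
  obtain C where C: "C > 0" "\<And>x. u1 x \<le> C * u2 x" using assms(4) unfolding weight_preceq_def by blast
  fix f assume "f \<in> weighted_orlicz \<Phi>2 u2"
  then obtain a where a: "a > 0" and fm: "f \<in> borel_measurable lebesgue"
    and I: "(\<integral>\<^sup>+ x. ennreal (\<Phi>2 (a * \<bar>u2 x * f x\<bar>)) \<partial>lebesgue) < \<infinity>"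
    unfolding weighted_orlicz_def by auto
  have "(\<integral>\<^sup>+ x. ennreal (\<Phi>1 (a / (C * C') * \<bar>u1 x * f x\<bar>)) \<partial>lebesgue)
     \<le> (\<integral>\<^sup>+ x. ennreal (\<Phi>2 (a * \<bar>u2 x * f x\<bar>)) \<partial>lebesgue)"
    by (intro nn_integral_mono ennreal_leI pointwise_12[OF assms(1,2)] C' C assms(5,6) a)
  then have "(\<integral>\<^sup>+ x. ennreal (\<Phi>1 (a / (C * C') * \<bar>u1 x * f x\<bar>)) \<partial>lebesgue) < \<infinity>"
    using I by (rule le_less_trans)
  moreover have "a / (C * C') > 0" using a C C' by auto
  ultimately show "f \<in> weighted_orlicz \<Phi>1 u1" using fm unfolding weighted_orlicz_def by blast
qed

lemma one_three:
  assumes "young_function \<Phi>1" "young_function \<Phi>2" "young_prec \<Phi>1 \<Phi>2"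
    and "weight_preceq u1 u2" "\<And>x. u1 x > 0" "\<And>x. u2 x > 0"
  shows "\<exists>K>0. \<forall>f. weighted_orlicz_norm \<Phi>1 u1 f \<le> ereal K * weighted_orlicz_norm \<Phi>2 u2 f"
proof -
  obtain C' where C': "C' > 0" "\<And>t. t \<ge> 0 \<Longrightarrow> \<Phi>1 t \<le> \<Phi>2 (C' * t)"
    using prec_le[OF assms(1-3)] by blast
  obtain C where C: "C > 0" "\<And>x. u1 x \<le> C * u2 x" using assms(4) unfolding weight_preceq_def by blast
  define K where "K = C * C'"
  have K: "K > 0" using C C' by (simp add: K_def)
  have "weighted_orlicz_norm \<Phi>1 u1 f \<le> ereal K * weighted_orlicz_norm \<Phi>2 u2 f" for f
  proof -
    let ?P = "\<lambda>x. \<exists>b. x = ereal b \<and> b > 0 \<and> (\<integral>\<^sup>+ x. ennreal (\<Phi>2 (\<bar>u2 x * f x\<bar> / b)) \<partial>lebesgue) \<le> 1"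
    have "weighted_orlicz_norm \<Phi>2 u2 f = Inf {x. ?P x}"
      unfolding weighted_orlicz_norm_def by (rule arg_cong[where f=Inf]) auto
    then have eq: "ereal K * weighted_orlicz_norm \<Phi>2 u2 f = Inf {ereal K * x |x. ?P x}"
      using ereal_Inf_cmult[OF K, of ?P] by simp
    have "weighted_orlicz_norm \<Phi>1 u1 f \<le> Inf {ereal K * x |x. ?P x}"
      unfolding weighted_orlicz_norm_def
    proof (rule Inf_superset_mono, safe)
      fix b assume b: "b > 0" and Ib: "(\<integral>\<^sup>+ x. ennreal (\<Phi>2 (\<bar>u2 x * f x\<bar> / b)) \<partial>lebesgue) \<le> 1"
      have "(\<integral>\<^sup>+ x. ennreal (\<Phi>1 (\<bar>u1 x * f x\<bar> / (K * b))) \<partial>lebesgue)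
         \<le> (\<integral>\<^sup>+ x. ennreal (\<Phi>2 (\<bar>u2 x * f x\<bar> / b)) \<partial>lebesgue)"
      proof (intro nn_integral_mono ennreal_leI)
        fix x
        have "\<Phi>1 ((1/b) / (C * C') * \<bar>u1 x * f x\<bar>) \<le> \<Phi>2 ((1/b) * \<bar>u2 x * f x\<bar>)"
          by (intro pointwise_12[OF assms(1,2)] C' C assms(5,6)) (use b in auto)
        then show "\<Phi>1 (\<bar>u1 x * f x\<bar> / (K * b)) \<le> \<Phi>2 (\<bar>u2 x * f x\<bar> / b)"
          by (simp add: K_def field_simps)
      qed
      then have "(\<integral>\<^sup>+ x. ennreal (\<Phi>1 (\<bar>u1 x * f x\<bar> / (K * b))) \<partial>lebesgue) \<le> 1"
        using Ib by (rule order.trans)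
      then show "\<exists>b'. ereal K * ereal b = ereal b' \<and> b' > 0 \<and>
          (\<integral>\<^sup>+ x. ennreal (\<Phi>1 (\<bar>u1 x * f x\<bar> / b')) \<partial>lebesgue) \<le> 1"
        using K b by (intro exI[of _ "K * b"]) auto
    qed
    then show ?thesis using eq by simp
  qed
  then show ?thesis using K by blast
qed

lemma norm_finite:
  assumes "young_function \<Phi>" "f \<in> weighted_orlicz \<Phi> u" "u \<in> borel_measurable lebesgue"
  shows "weighted_orlicz_norm \<Phi> u f < \<infinity>"
proof -
  obtain b where b: "b > 0" "(\<integral>\<^sup>+ x. ennreal (\<Phi> (\<bar>u x * f x\<bar> / b)) \<partial>lebesgue) \<le> 1"
    using orlicz_norm_ball[OF assms] by blast
  have "weighted_orlicz_norm \<Phi> u f \<le> ereal b"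
    unfolding weighted_orlicz_norm_def by (rule Inf_lower) (use b in auto)
  then show ?thesis using le_less_trans by fastforce
qed

lemma three_two:
  assumes "young_function \<Phi>1" "young_function \<Phi>2"
    and "u1 \<in> borel_measurable lebesgue" "u2 \<in> borel_measurable lebesgue"
    and "\<exists>C>0. \<forall>f\<in>weighted_orlicz \<Phi>2 u2.
           weighted_orlicz_norm \<Phi>1 u1 f \<le> ereal C * weighted_orlicz_norm \<Phi>2 u2 f"
  shows "weighted_orlicz \<Phi>2 u2 \<subseteq> weighted_orlicz \<Phi>1 u1"
proof
  fix f assume f: "f \<in> weighted_orlicz \<Phi>2 u2"
  obtain C where C: "C > 0" "weighted_orlicz_norm \<Phi>1 u1 f \<le> ereal C * weighted_orlicz_norm \<Phi>2 u2 f"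
    using assms(5) f by blast
  have "weighted_orlicz_norm \<Phi>2 u2 f < \<infinity>" by (rule norm_finite[OF assms(2) f assms(4)])
  then have "ereal C * weighted_orlicz_norm \<Phi>2 u2 f < \<infinity>" using C(1) by (cases "weighted_orlicz_norm \<Phi>2 u2 f") auto
  then have "weighted_orlicz_norm \<Phi>1 u1 f \<noteq> \<infinity>" using C(2) by auto
  then obtain b where b: "b > 0" "(\<integral>\<^sup>+ x. ennreal (\<Phi>1 (\<bar>u1 x * f x\<bar> / b)) \<partial>lebesgue) \<le> 1"
  proof -
    assume h: "\<And>b. b > 0 \<Longrightarrow> (\<integral>\<^sup>+ x. ennreal (\<Phi>1 (\<bar>u1 x * f x\<bar> / b)) \<partial>lebesgue) \<le> 1 \<Longrightarrow> thesis"
    show thesis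
    proof (rule ccontr)
      assume "\<not> thesis"
      then have "{ereal b |b. 0 < b \<and> (\<integral>\<^sup>+ x. ennreal (\<Phi>1 (\<bar>u1 x * f x\<bar> / b)) \<partial>lebesgue) \<le> 1} = {}"
        using h by auto
      then have "weighted_orlicz_norm \<Phi>1 u1 f = Inf {}"
        unfolding weighted_orlicz_norm_def by (rule arg_cong)
      then show False using \<open>weighted_orlicz_norm \<Phi>1 u1 f \<noteq> \<infinity>\<close>
        by (simp add: top_ereal_def)
    qed
  qed
  have fm: "f \<in> borel_measurable lebesgue" using f unfolding weighted_orlicz_def by auto
  have "(\<integral>\<^sup>+ x. ennreal (\<Phi>1 ((1/b) * \<bar>u1 x * f x\<bar>)) \<partial>lebesgue) < \<infinity>"
    using b by (simp add: le_less_trans)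
  then show "f \<in> weighted_orlicz \<Phi>1 u1" using fm b unfolding weighted_orlicz_def
    by (intro CollectI conjI exI[of _ "1/b"]) auto
qed

lemma exists_E:
  fixes u1 u2 :: "'a::euclidean_space \<Rightarrow> real"
  assumes "u1 \<in> borel_measurable lebesgue" "u2 \<in> borel_measurable lebesgue"
  obtains E M where "E \<in> sets lebesgue" "0 < emeasure lebesgue E" "emeasure lebesgue E < \<infinity>"
    "M > 0" "\<And>z. z \<in> E \<Longrightarrow> u1 (-z) \<le> M \<and> u2 z \<le> M"
proof -
  have m1: "(\<lambda>z. u1 (-z)) \<in> borel_measurable lebesgue"
    using measurable_comp[OF lebesgue_measurable_scaling[of "-1"] assms(1)] by (simp add: o_def)
  define F where "F n = ball (0::'a) 1 \<inter> {z. u1 (-z) \<le> real (Suc n) \<and> u2 z \<le> real (Suc n)}" for n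
  have Fm: "F n \<in> sets lebesgue" for n
  proof -
    have "{z \<in> space lebesgue. u1 (-z) \<le> real (Suc n) \<and> u2 z \<le> real (Suc n)} \<in> sets lebesgue"
      using m1 assms(2) by measurable
    moreover have "ball (0::'a) 1 \<in> sets lebesgue" by simp
    ultimately have "ball (0::'a) 1 \<inter> {z \<in> space lebesgue. u1 (-z) \<le> real (Suc n) \<and> u2 z \<le> real (Suc n)} \<in> sets lebesgue"
      by (rule sets.Int[rotated])
    then show ?thesis unfolding F_def by simp
  qed
  have U: "(\<Union>n. F n) = ball 0 1"
  proof safe
    fix z :: 'a assume "z \<in> ball 0 1"
    obtain n where "max (u1 (-z)) (u2 z) \<le> real n" using real_arch_simple by blast
    then have "z \<in> F n" using \<open>z \<in> ball 0 1\<close> unfolding F_def by auto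
    then show "z \<in> (\<Union>n. F n)" by blast
  qed (auto simp: F_def)
  have "ball (0::'a) 1 \<notin> null_sets lebesgue"
  proof
    assume "ball (0::'a) 1 \<in> null_sets lebesgue"
    then have "emeasure lebesgue (ball (0::'a) 1) = 0" by auto
    then have "measure lborel (ball (0::'a) 1) = 0" by (simp add: measure_def)
    then show False using content_ball_pos[of 1 "0::'a"] by simp
  qed
  then obtain n where n: "F n \<notin> null_sets lebesgue"
    using null_sets_UN[of F lebesgue] U by (metis)
  have pos: "0 < emeasure lebesgue (F n)" using n Fm[of n] by (auto simp: null_sets_def zero_less_iff_neq_zero)
  have "emeasure lebesgue (F n) \<le> emeasure lebesgue (ball (0::'a) 1)"
    by (rule emeasure_mono) (auto simp: F_def)
  also have "\<dots> < \<infinity>" using emeasure_lborel_ball_finite[of "0::'a" 1] by simp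
  finally have fin: "emeasure lebesgue (F n) < \<infinity>" .
  show ?thesis
    by (rule that[OF Fm pos fin, of "real (Suc n)"]) (auto simp: F_def)
qed

lemma exists_c:
  assumes "young_function \<Phi>" "e > 0"
  obtains c :: "nat \<Rightarrow> real" where "\<And>k. 0 < c k" "\<And>k. c k \<le> 1" "\<And>k. \<Phi> (c k) * e \<le> (1/2)^k"
    "\<And>j k. j \<le> k \<Longrightarrow> c k \<le> c j"
proof -
  define P where "P k \<delta> = (0 < \<delta> \<and> \<delta> \<le> 1 \<and> (\<forall>t. 0 < t \<and> t \<le> \<delta> \<longrightarrow> \<Phi> t * e \<le> (1/2)^k))" for k \<delta>
  have ex: "\<exists>\<delta>. P k \<delta>" for k
  proof -
    have "(\<Phi> \<longlongrightarrow> 0) (at_right 0)" using assms(1) unfolding young_function_def by auto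
    moreover have "(1/2::real)^k / e > 0" using assms(2) by simp
    ultimately have "eventually (\<lambda>t. dist (\<Phi> t) 0 < (1/2)^k / e) (at_right 0)"
      by (rule tendstoD)
    then obtain b where b: "b > (0::real)" "\<And>t. t > 0 \<Longrightarrow> t < b \<Longrightarrow> dist (\<Phi> t) 0 < (1/2)^k / e"
      unfolding eventually_at_right_field by auto
    have "P k (min 1 (b/2))" unfolding P_def
    proof (intro conjI allI impI)
      fix t assume t: "0 < t \<and> t \<le> min 1 (b/2)"
      then have "\<bar>\<Phi> t\<bar> < (1/2)^k / e" using b(2)[of t] b(1) by auto
      then show "\<Phi> t * e \<le> (1/2)^k" using assms(2) by (simp add: pos_less_divide_eq abs_less_iff)
    qed (use b in auto)
    then show ?thesis by blast
  qed
  define d where "d k = (SOME \<delta>. P k \<delta>)" for k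
  have d: "P k (d k)" for k unfolding d_def using ex someI_ex by metis
  define c where "c k = Min (d ` {..k})" for k
  have ck: "c k \<le> d k" for k unfolding c_def by (rule Min_le) auto
  have cpos: "0 < c k" for k unfolding c_def using d by (subst Min_gr_iff) (auto simp: P_def)
  show ?thesis
  proof (rule that)
    fix k
    show "0 < c k" by (rule cpos)
    show "c k \<le> 1" using ck[of k] d[of k] by (auto simp: P_def)
    show "\<Phi> (c k) * e \<le> (1/2)^k" using ck[of k] d[of k] cpos[of k] by (auto simp: P_def)
  next
    fix j k :: nat assume "j \<le> k"
    then show "c k \<le> c j" unfolding c_def by (intro Min_antimono) auto
  qed
qed

lemma two_one:
  fixes u1 u2 :: "'a::euclidean_space \<Rightarrow> real"
  assumes Y1: "young_function \<Phi>1" and Y2: "young_function \<Phi>2"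
    and p1: "\<And>x. u1 x > 0" and p2: "\<And>x. u2 x > 0"
    and m1: "u1 \<in> borel_measurable lebesgue" and m2: "u2 \<in> borel_measurable lebesgue"
    and s1: "\<And>x y. u1 (x + y) \<le> u1 x * u1 y"
    and s2: "\<And>x y. u2 (x + y) \<le> u2 x * u2 y"
    and incl: "weighted_orlicz \<Phi>2 u2 \<subseteq> weighted_orlicz \<Phi>1 u1"
  shows "weight_preceq u1 u2"
proof (rule ccontr)
  assume nw: "\<not> weight_preceq u1 u2"
  have big: "\<exists>x. u1 x > C * u2 x" if "C > 0" for C
    using nw that unfolding weight_preceq_def by (meson not_le)
  obtain E M where E: "E \<in> sets lebesgue" "0 < emeasure lebesgue E" "emeasure lebesgue E < \<infinity>"
    and M: "M > 0" "\<And>z. z \<in> E \<Longrightarrow> u1 (-z) \<le> M \<and> u2 z \<le> M"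
    using exists_E[OF m1 m2] by metis
  define e where "e = enn2real (emeasure lebesgue E)"
  have eE: "emeasure lebesgue E = ennreal e" using E unfolding e_def by (simp add: ennreal_enn2real_if less_top)
  have epos: "e > 0" using E eE by (simp add: ennreal_less_zero_iff)
  obtain c :: "nat \<Rightarrow> real" where c: "\<And>k. 0 < c k" "\<And>k. c k \<le> 1" "\<And>k. \<Phi>2 (c k) * e \<le> (1/2)^k"
    "\<And>j k. j \<le> k \<Longrightarrow> c k \<le> c j"
    using exists_c[OF Y2 epos] by metis
  have exN: "\<exists>N>0. \<Phi>1 (N * c k / real (Suc k)) * e \<ge> real (Suc k)" for k
  proof -
    have "filterlim \<Phi>1 at_top at_top" using Y1 unfolding young_function_def by auto
    then have "eventually (\<lambda>t. \<Phi>1 t \<ge> real (Suc k) / e) at_top"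
      by (simp add: filterlim_at_top)
    then obtain T where T: "\<And>t. t \<ge> T \<Longrightarrow> \<Phi>1 t \<ge> real (Suc k) / e"
      unfolding eventually_at_top_linorder by auto
    define N where "N = max 1 (T * real (Suc k) / c k)"
    have "N * c k / real (Suc k) \<ge> T"
    proof -
      have "N * c k \<ge> T * real (Suc k) / c k * c k"
        unfolding N_def using c(1)[of k] by (intro mult_right_mono) auto
      then have "N * c k \<ge> T * real (Suc k)" using c(1)[of k] by simp
      then show ?thesis by (simp add: pos_le_divide_eq)
    qed
    then have "\<Phi>1 (N * c k / real (Suc k)) \<ge> real (Suc k) / e" by (rule T)
    then have "\<Phi>1 (N * c k / real (Suc k)) * e \<ge> real (Suc k)" using epos by (simp add: pos_divide_le_eq)
    moreover have "N > 0" unfolding N_def by auto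
    ultimately show ?thesis by blast
  qed
  then obtain N where N: "\<And>k. N k > 0" "\<And>k. \<Phi>1 (N k * c k / real (Suc k)) * e \<ge> real (Suc k)"
    by metis
  have "\<exists>x. u1 x > M * M * N k * u2 x" for k using big[of "M * M * N k"] M N by auto
  then obtain x where x: "\<And>k. u1 (x k) > M * M * N k * u2 (x k)" by metis
  define D where "D k = (+) (x k) ` E" for k
  have Dm: "D k \<in> sets lebesgue" for k unfolding D_def by (rule lebesgue_sets_translation[OF E(1)])
  have De: "emeasure lebesgue (D k) = ennreal e" for k
    using emeasure_lebesgue_affine[of 1 "x k" E] eE unfolding D_def by (simp add: add.commute cong: image_cong_simp)
  have Dratio: "u1 y \<ge> N k * u2 y" if yD: "y \<in> D k" for y k
  proof -
    obtain z where z: "z \<in> E" "y = x k + z" using yD unfolding D_def by auto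
    have "u1 (x k) = u1 (y + (-z))" using z by simp
    also have "\<dots> \<le> u1 y * u1 (-z)" by (rule s1)
    also have "\<dots> \<le> u1 y * M" using M(2)[OF z(1)] p1[of y] by (intro mult_left_mono) auto
    finally have A: "u1 (x k) \<le> u1 y * M" .
    have "u2 y \<le> u2 (x k) * u2 z" using s2 z by simp
    also have "\<dots> \<le> u2 (x k) * M" using M(2)[OF z(1)] p2[of "x k"] by (intro mult_left_mono) auto
    finally have B: "u2 y \<le> u2 (x k) * M" .
    have "M * (N k * u2 y) \<le> M * (N k * (u2 (x k) * M))"
      using B M N(1)[of k] by (intro mult_left_mono) auto
    also have "\<dots> = M * M * N k * u2 (x k)" by simp
    also have "\<dots> < u1 (x k)" by (rule x)
    also have "\<dots> \<le> M * u1 y" using A by (simp add: mult.commute)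
    finally show ?thesis using M by simp
  qed
  define h where "h y = (SUP k. c k * indicator (D k) y)" for y
  have bdd: "bdd_above (range (\<lambda>k. c k * indicator (D k) y))" for y
    by (rule bdd_aboveI[of _ 1]) (use c in \<open>auto simp: indicator_def\<close>)
  have hlow: "h y \<ge> c k" if "y \<in> D k" for y k
  proof -
    have "c k = c k * indicator (D k) y" using that by simp
    also have "\<dots> \<le> h y" unfolding h_def by (rule cSUP_upper[OF _ bdd]) auto
    finally show ?thesis .
  qed
  have hnn: "h y \<ge> 0" for y
  proof -
    have "0 \<le> c 0 * indicator (D 0) y" using c(1)[of 0] by (simp add: indicator_def)
    also have "\<dots> \<le> h y" unfolding h_def by (rule cSUP_upper[OF _ bdd]) auto
    finally show ?thesis .
  qed
  have hmeas: "h \<in> borel_measurable lebesgue"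
    unfolding h_def by (rule borel_measurable_cSUP) (use Dm bdd in auto)
  have hup: "ennreal (\<Phi>2 (h y)) \<le> (\<Sum>k. ennreal (\<Phi>2 (c k)) * indicator (D k) y)" for y
  proof (cases "\<exists>k. y \<in> D k")
    case False
    then have "h y = 0" unfolding h_def by simp
    then show ?thesis using Y2 by (simp add: young_function_def)
  next
    case True
    define j where "j = (LEAST k. y \<in> D k)"
    have j: "y \<in> D j" unfolding j_def using True by (metis LeastI)
    have "h y \<le> c j" unfolding h_def
    proof (rule cSUP_least)
      fix k
      show "c k * indicator (D k) y \<le> c j"
      proof (cases "y \<in> D k")
        case True
        then have "j \<le> k" unfolding j_def by (rule Least_le)
        then show ?thesis using True c(4) by simp
      next
        case False then show ?thesis using c(1)[of j] by simp
      qed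
    qed auto
    then have "\<Phi>2 (h y) \<le> \<Phi>2 (c j)" using hnn by (intro young_mono[OF Y2]) auto
    then have "ennreal (\<Phi>2 (h y)) \<le> ennreal (\<Phi>2 (c j)) * indicator (D j) y"
      using j by (simp add: ennreal_leI)
    also have "\<dots> = (\<Sum>k\<in>{j}. ennreal (\<Phi>2 (c k)) * indicator (D k) y)" by (simp only: sum.insert sum.empty finite.emptyI empty_iff add_0_right not_False_eq_True)
    also have "\<dots> \<le> (\<Sum>k. ennreal (\<Phi>2 (c k)) * indicator (D k) y)"
      by (rule sum_le_suminf) auto
    finally show ?thesis .
  qed
  define f where "f y = h y / u2 y" for y
  have fmeas: "f \<in> borel_measurable lebesgue" unfolding f_def using hmeas m2 by measurable
  have uf2: "\<bar>u2 y * f y\<bar> = h y" for y using p2[of y] hnn[of y] by (simp add: f_def)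
  have "(\<integral>\<^sup>+ y. ennreal (\<Phi>2 (1 * \<bar>u2 y * f y\<bar>)) \<partial>lebesgue)
      \<le> (\<integral>\<^sup>+ y. (\<Sum>k. ennreal (\<Phi>2 (c k)) * indicator (D k) y) \<partial>lebesgue)"
    by (rule nn_integral_mono) (simp add: uf2 hup)
  also have "\<dots> = (\<Sum>k. \<integral>\<^sup>+ y. ennreal (\<Phi>2 (c k)) * indicator (D k) y \<partial>lebesgue)"
    by (rule nn_integral_suminf) (use Dm in auto)
  also have "\<dots> = (\<Sum>k. ennreal (\<Phi>2 (c k) * e))"
  proof (rule suminf_cong)
    fix k
    have "(\<integral>\<^sup>+ y. ennreal (\<Phi>2 (c k)) * indicator (D k) y \<partial>lebesgue) = ennreal (\<Phi>2 (c k)) * emeasure lebesgue (D k)"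
      using Dm by (rule nn_integral_cmult_indicator)
    also have "\<dots> = ennreal (\<Phi>2 (c k) * e)"
      unfolding De using young_nonneg[OF Y2, of "c k"] c(1)[of k] by (simp add: ennreal_mult')
    finally show "(\<integral>\<^sup>+ y. ennreal (\<Phi>2 (c k)) * indicator (D k) y \<partial>lebesgue) = ennreal (\<Phi>2 (c k) * e)" .
  qed
  also have "\<dots> \<le> (\<Sum>k. ennreal ((1/2)^k))"
    by (intro suminf_le ennreal_leI c(3)) auto
  also have "\<dots> = ennreal (\<Sum>k. (1/2)^k)"
    by (rule suminf_ennreal2) (auto simp: summable_geometric)
  also have "\<dots> < \<infinity>" by simp
  finally have "f \<in> weighted_orlicz \<Phi>2 u2"
    unfolding weighted_orlicz_def using fmeas by (intro CollectI conjI exI[of _ 1]) auto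
  with incl have "f \<in> weighted_orlicz \<Phi>1 u1" by blast
  then obtain a where a: "a > 0"
    and I: "(\<integral>\<^sup>+ y. ennreal (\<Phi>1 (a * \<bar>u1 y * f y\<bar>)) \<partial>lebesgue) < \<infinity>"
    unfolding weighted_orlicz_def by auto
  define I where "I = (\<integral>\<^sup>+ y. ennreal (\<Phi>1 (a * \<bar>u1 y * f y\<bar>)) \<partial>lebesgue)"
  have Ibig: "I \<ge> ennreal (real (Suc k))" if ka: "1 / real (Suc k) \<le> a" for k
  proof -
    have "ennreal (real (Suc k)) \<le> ennreal (\<Phi>1 (N k * c k / real (Suc k)) * e)"
      using N(2)[of k] by (rule ennreal_leI)
    also have "\<dots> = (\<integral>\<^sup>+ y. ennreal (\<Phi>1 (N k * c k / real (Suc k))) * indicator (D k) y \<partial>lebesgue)"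
    proof -
      have "(\<integral>\<^sup>+ y. ennreal (\<Phi>1 (N k * c k / real (Suc k))) * indicator (D k) y \<partial>lebesgue) = ennreal (\<Phi>1 (N k * c k / real (Suc k))) * emeasure lebesgue (D k)"
        using Dm by (rule nn_integral_cmult_indicator)
      also have "\<dots> = ennreal (\<Phi>1 (N k * c k / real (Suc k)) * e)"
        unfolding De using young_nonneg[OF Y1, of "N k * c k / real (Suc k)"] c(1)[of k] N(1)[of k] epos
        by (simp add: ennreal_mult')
      finally show ?thesis by simp
    qed
    also have "\<dots> \<le> I" unfolding I_def
    proof (rule nn_integral_mono)
      fix y
      show "ennreal (\<Phi>1 (N k * c k / real (Suc k))) * indicator (D k) y
          \<le> ennreal (\<Phi>1 (a * \<bar>u1 y * f y\<bar>))"
      proof (cases "y \<in> D k")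
        case False then show ?thesis by simp
      next
        case True
        have "N k * c k / real (Suc k) \<le> a * (N k * c k)"
        proof -
          have "N k * c k / real (Suc k) = (1 / real (Suc k)) * (N k * c k)" by simp
          also have "\<dots> \<le> a * (N k * c k)" using ka N(1)[of k] c(1)[of k] by (intro mult_right_mono) auto
          finally show ?thesis .
        qed
        also have "N k * c k \<le> \<bar>u1 y * f y\<bar>"
        proof -
          have "N k * u2 y * c k \<le> u1 y * h y"
            using Dratio[OF True] hlow[OF True] N(1)[of k] c(1)[of k] p2[of y] hnn[of y] p1[of y]
            by (intro mult_mono) auto
          then have "N k * c k \<le> u1 y * h y / u2 y" using p2[of y] by (simp add: pos_le_divide_eq mult_ac)
          also have "\<dots> = \<bar>u1 y * f y\<bar>" using p1[of y] p2[of y] hnn[of y] by (simp add: f_def)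
          finally show ?thesis .
        qed
        then have "a * (N k * c k) \<le> a * \<bar>u1 y * f y\<bar>" using a by simp
        finally have "\<Phi>1 (N k * c k / real (Suc k)) \<le> \<Phi>1 (a * \<bar>u1 y * f y\<bar>)"
          using N(1)[of k] c(1)[of k] by (intro young_mono[OF Y1]) auto
        then show ?thesis using True by (simp add: ennreal_leI)
      qed
    qed
    finally show ?thesis .
  qed
  from I have "I < \<infinity>" unfolding I_def .
  then obtain r where r: "I = ennreal r" "r \<ge> 0" by (cases I) auto
  obtain k :: nat where k: "real k \<ge> max r (1 / a)" using real_arch_simple by blast
  have "1 / real (Suc k) \<le> a"
  proof -
    have "1 / a < real (Suc k)" using k by simp
    then show ?thesis using a by (simp add: divide_less_eq field_simps)
  qed
  then have "ennreal (real (Suc k)) \<le> ennreal r" using Ibig r by simp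
  then have "real (Suc k) \<le> r" using r by (simp only: ennreal_le_iff)
  then show False using k by simp
qed

theorem theorem2p4:
  fixes \<Phi>1 \<Phi>2 :: "real \<Rightarrow> real" and u1 u2 :: "'a::euclidean_space \<Rightarrow> real"
  assumes "young_function \<Phi>1" and "young_function \<Phi>2" and "young_prec \<Phi>1 \<Phi>2"
    and "\<And>x. u1 x > 0" and "\<And>x. u2 x > 0"
    and "u1 \<in> borel_measurable lebesgue" and "u2 \<in> borel_measurable lebesgue"
    and "\<And>x y. u1 (x + y) \<le> u1 x * u1 y"
    and "\<And>x y. u2 (x + y) \<le> u2 x * u2 y"
  shows "(weight_preceq u1 u2 \<longleftrightarrow> weighted_orlicz \<Phi>2 u2 \<subseteq> weighted_orlicz \<Phi>1 u1)
    \<and> (weighted_orlicz \<Phi>2 u2 \<subseteq> weighted_orlicz \<Phi>1 u1 \<longleftrightarrow>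
        (\<exists>C>0. \<forall>f\<in>weighted_orlicz \<Phi>2 u2.
           weighted_orlicz_norm \<Phi>1 u1 f \<le> ereal C * weighted_orlicz_norm \<Phi>2 u2 f))"
proof -
  have e12: "weight_preceq u1 u2 \<longleftrightarrow> weighted_orlicz \<Phi>2 u2 \<subseteq> weighted_orlicz \<Phi>1 u1"
    using one_two[OF assms(1-3), of u1 u2, OF _ assms(4,5)] two_one[OF assms(1,2,4-9)] by blast
  have "weighted_orlicz \<Phi>2 u2 \<subseteq> weighted_orlicz \<Phi>1 u1 \<Longrightarrow>
        (\<exists>C>0. \<forall>f\<in>weighted_orlicz \<Phi>2 u2.
           weighted_orlicz_norm \<Phi>1 u1 f \<le> ereal C * weighted_orlicz_norm \<Phi>2 u2 f)"
    using e12 one_three[OF assms(1-3), of u1 u2, OF _ assms(4,5)] by blast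
  moreover have "(\<exists>C>0. \<forall>f\<in>weighted_orlicz \<Phi>2 u2.
           weighted_orlicz_norm \<Phi>1 u1 f \<le> ereal C * weighted_orlicz_norm \<Phi>2 u2 f) \<Longrightarrow>
        weighted_orlicz \<Phi>2 u2 \<subseteq> weighted_orlicz \<Phi>1 u1"
    by (rule three_two[OF assms(1,2,6,7)])
  ultimately show ?thesis using e12 by blast
qed

end
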